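(* Let $H, Q, R, B, D\in\mathbb{R}^{n\times n}$ be symmetric matrices, let $\beta>0$, $\lambda>0$, $r>0$ with $\beta(\lambda+r)<4$. Let $Z^{\ast}$ be the unique minimizer of $$P \mapsto \operatorname{tr}(HP) + \frac{1}{\beta}\operatorname{tr}\bigl\{P\ln P + (I-P)\ln(I-P)\bigr\} + \frac{\lambda}{2}\|P-Q+B\|_F^2 + \frac{r}{2}\|P-R+D\|_F^2$$ over symmetric $P$ with $0\preceq P\preceq I$. Starting from any symmetric $Z^0\in\mathbb{R}^{n\times n}$, define for $l\ge 0$ $$Y^l = H + \lambda(Z^l - Q + B) + r(Z^l - R + D), \qquad Z^{l+1} = \bigl(I+\exp(\beta Y^l)\bigr)^{-1}.$$ Then for all $l\ge 0$, $$\|Z^l - Z^{\ast}\|_F \le \Bigl(\frac{\beta(\lambda+r)}{4}\Bigr)^l \|Z^0 - Z^{\ast}\|_F,$$ so $Z^l\to Z^\ast$ exponentially fast.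
   Context: Matrix functions ($\ln$, $\exp$, inverse of $I+\exp(\cdot)$) of symmetric matrices are defined by spectral calculus, with $0\ln 0 = 0$. For symmetric matrices, $A\preceq B$ means $B-A$ is positive semidefinite. $\|\cdot\|_F$ is the Frobenius norm. *)

theory Defs
  imports "HOL-Analysis.Analysis"
begin

type_synonym 'n sqmat = "real^'n^'n"

definition symmetric_mat :: "'n::finite sqmat \<Rightarrow> bool" where
  "symmetric_mat A \<longleftrightarrow> transpose A = A"

definition diag_mat :: "(real^'n::finite) \<Rightarrow> 'n sqmat" where
  "diag_mat d = (\<chi> i j. if i = j then d $ i else 0)"

definition matfun :: "(real \<Rightarrow> real) \<Rightarrow> 'n::finite sqmat \<Rightarrow> 'n sqmat" where
  "matfun f A = (THE M. \<exists>U d. orthogonal_matrix U \<and>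
      A = U ** diag_mat d ** transpose U \<and>
      M = U ** diag_mat (\<chi> i. f (d $ i)) ** transpose U)"

definition psd :: "'n::finite sqmat \<Rightarrow> bool" where
  "psd A \<longleftrightarrow> symmetric_mat A \<and> (\<forall>x. 0 \<le> x \<bullet> (A *v x))"

definition loewner_le :: "'n::finite sqmat \<Rightarrow> 'n sqmat \<Rightarrow> bool" where
  "loewner_le A B \<longleftrightarrow> psd (B - A)"

definition frob_norm :: "'n::finite sqmat \<Rightarrow> real" where
  "frob_norm A = sqrt (\<Sum>i\<in>UNIV. \<Sum>j\<in>UNIV. (A $ i $ j)^2)"

text \<open>x ln x with the convention 0 ln 0 = 0 (in Isabelle ln 0 = 0 anyway).\<close>
definition xlnx :: "real \<Rightarrow> real" where
  "xlnx x = (if x = 0 then 0 else x * ln x)"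

definition objective ::
  "'n::finite sqmat \<Rightarrow> 'n sqmat \<Rightarrow> 'n sqmat \<Rightarrow> 'n sqmat \<Rightarrow> 'n sqmat \<Rightarrow>
   real \<Rightarrow> real \<Rightarrow> real \<Rightarrow> 'n sqmat \<Rightarrow> real" where
  "objective H Q R B D \<beta> lam r P =
     trace (H ** P)
     + (1 / \<beta>) * trace (matfun xlnx P + matfun xlnx (mat 1 - P))
     + (lam / 2) * (frob_norm (P - Q + B))^2
     + (r / 2) * (frob_norm (P - R + D))^2"

definition feasible :: "'n::finite sqmat \<Rightarrow> bool" where
  "feasible P \<longleftrightarrow> symmetric_mat P \<and> loewner_le 0 P \<and> loewner_le P (mat 1)"

end

theory Submission
  imports Defs
begin


lemma diag_right: "((M::'n::finite sqmat) ** diag_mat d) $ i $ j = M$i$j * d$j"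
  by (simp add: matrix_matrix_mult_def diag_mat_def if_distrib cong: if_cong)
lemma diag_left: "(diag_mat d ** (M::'n::finite sqmat)) $ i $ j = d$i * M$i$j"
proof -
  have "(\<Sum>k\<in>UNIV. (if i = k then d $ i else 0) * M $ k $ j) = (\<Sum>k\<in>UNIV. if i = k then d $ i * M $ k $ j else 0)"
    by (rule sum.cong) auto
  then show ?thesis by (simp add: matrix_matrix_mult_def diag_mat_def)
qed
lemma transpose_diag[simp]: "transpose (diag_mat d) = diag_mat d"
  by (simp add: transpose_def diag_mat_def vec_eq_iff)

lemma sym_dot: "transpose A = A \<Longrightarrow> (A *v x) \<bullet> y = x \<bullet> ((A::real^'n::finite^'n) *v y)"
  by (metis dot_lmul_matrix vector_transpose_matrix)

definition eigok :: "real^'n::finite^'n \<Rightarrow> (real^'n) set \<Rightarrow> bool" where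
  "eigok A S \<longleftrightarrow> pairwise orthogonal S \<and> (\<forall>x\<in>S. norm x = 1 \<and> (\<exists>\<mu>. A *v x = \<mu> *\<^sub>R x))"

lemma eigok_indep: "eigok A S \<Longrightarrow> independent S"
  unfolding eigok_def by (metis norm_zero pairwise_orthogonal_independent zero_neq_one)

lemma eigok_card: "eigok (A::real^'n::finite^'n) S \<Longrightarrow> finite S \<and> card S \<le> CARD('n)"
  using independent_bound[OF eigok_indep[of A S]] by simp

lemma quad_lemma:
  fixes a c :: real
  assumes "\<And>t. t > 0 \<Longrightarrow> 2*t*a + t^2 * c \<le> 0" and "a \<ge> 0"
  shows "a = 0"
proof (rule ccontr)
  assume "a \<noteq> 0" then have a: "a > 0" using assms by simp
  define t where "t = a / (\<bar>c\<bar> + 1)"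
  have t: "t > 0" using a by (simp add: t_def)
  have "t * \<bar>c\<bar> \<le> a" unfolding t_def using a
    by (simp add: field_simps)
  have "-\<bar>c\<bar> \<le> c" by simp
  then have "t*(-\<bar>c\<bar>) \<le> t*c" using t by (intro mult_left_mono) auto
  then have "t*c \<ge> -a" using \<open>t * \<bar>c\<bar> \<le> a\<close> by simp
  have "t * (2*a + t*c) \<le> 0" using assms(1)[OF t] by (simp add: algebra_simps power2_eq_square)
  then have "2*a + t*c \<le> 0" using t by (simp add: mult_le_0_iff)
  then show False using \<open>t*c \<ge> -a\<close> a by linarith
qed

lemma eig_extend:
  fixes A :: "real^'n::finite^'n"
  assumes symA: "transpose A = A" and ok: "eigok A S" and sp: "span S \<noteq> UNIV"
  shows "\<exists>v. v \<notin> S \<and> eigok A (insert v S)"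
proof -
  have "span S \<subset> span UNIV" using sp by auto
  then obtain x0 where x0: "x0 \<noteq> 0" "x0 \<in> span UNIV" "\<And>y. y \<in> span S \<Longrightarrow> orthogonal x0 y"
    by (rule orthogonal_to_subspace_exists_gen) auto
  define T where "T = {y. \<forall>x \<in> S. orthogonal x y}"
  have subT: "subspace T" unfolding T_def by (rule subspace_orthogonal_to_vectors)
  define K where "K = T \<inter> sphere 0 1"
  have "compact K" unfolding K_def using closed_subspace[OF subT] by (intro closed_Int_compact) auto
  have x0T: "x0 \<in> T" unfolding T_def
  proof (clarify)
    fix x assume "x \<in> S" then have "orthogonal x0 x" using x0(3) span_superset by blast
    then show "orthogonal x x0" by (simp add: orthogonal_commute)
  qed
  have "x0 /\<^sub>R norm x0 \<in> T" using subT x0T by (rule subspace_scale)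
  moreover have "norm (x0 /\<^sub>R norm x0) = 1" using x0(1) by simp
  ultimately have "x0 /\<^sub>R norm x0 \<in> K" unfolding K_def by simp
  then have "K \<noteq> {}" by auto
  have cont: "continuous_on K (\<lambda>x. x \<bullet> (A *v x))"
    by (rule continuous_on_inner[OF continuous_on_id linear_continuous_on[OF matrix_vector_mul_bounded_linear]])
  obtain v where vK: "v \<in> K" and vmax: "\<And>y. y \<in> K \<Longrightarrow> y \<bullet> (A *v y) \<le> v \<bullet> (A *v v)"
    using continuous_attains_sup[OF \<open>compact K\<close> \<open>K \<noteq> {}\<close> cont] by blast
  define \<mu> where "\<mu> = v \<bullet> (A *v v)"
  define u where "u = A *v v - \<mu> *\<^sub>R v"
  have vT: "v \<in> T" and nv: "norm v = 1" using vK by (auto simp: K_def)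
  have vv: "v \<bullet> v = 1" using nv by (simp add: norm_eq_1)
  have AvT: "A *v v \<in> T"
    unfolding T_def
  proof (clarify)
    fix x assume xS: "x \<in> S"
    then obtain m where m: "A *v x = m *\<^sub>R x" using ok unfolding eigok_def by blast
    have "x \<bullet> (A *v v) = (A *v x) \<bullet> v" using sym_dot[OF symA] by simp
    also have "\<dots> = m * (x \<bullet> v)" by (simp add: m)
    also have "x \<bullet> v = 0" using vT xS unfolding T_def orthogonal_def by blast
    finally show "orthogonal x (A *v v)" by (simp add: orthogonal_def)
  qed
  have uT: "u \<in> T" unfolding u_def using AvT vT subT by (simp add: subspace_diff subspace_scale)
  have uv: "u \<bullet> v = 0"
  proof -
    have "v \<bullet> u = 0" using vv by (simp add: u_def \<mu>_def inner_diff_right)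
    then show ?thesis by (simp add: inner_commute)
  qed
  have uAv: "u \<bullet> (A *v v) = u \<bullet> u"
    by (simp add: u_def inner_diff_left inner_diff_right \<mu>_def vv sym_dot[OF symA] inner_commute)
  define a where "a = u \<bullet> u"
  define c where "c = u \<bullet> (A *v u) - \<mu> * a"
  have key: "2*t*a + t^2 * c \<le> 0" if t: "t > 0" for t
  proof -
    define x where "x = v + t *\<^sub>R u"
    have xx: "x \<bullet> x = 1 + t^2 * a"
      by (simp add: x_def inner_add_left inner_add_right vv uv inner_commute a_def power2_eq_square)
    have nx: "norm x ^2 = 1 + t^2 * a" using xx by (simp add: power2_norm_eq_inner)
    have apos: "a \<ge> 0" by (simp add: a_def)
    have "x \<bullet> x > 0" using xx apos by (simp add: add_pos_nonneg)
    then have npos: "norm x > 0" by auto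
    have xT: "x \<in> T" unfolding x_def using vT uT subT by (simp add: subspace_add subspace_scale)
    have "x /\<^sub>R norm x \<in> K" unfolding K_def using xT subT npos by (simp add: subspace_scale)
    then have le: "(x /\<^sub>R norm x) \<bullet> (A *v (x /\<^sub>R norm x)) \<le> \<mu>" using vmax \<mu>_def by blast
    have "(x /\<^sub>R norm x) \<bullet> (A *v (x /\<^sub>R norm x)) = (x \<bullet> (A *v x)) / (norm x)^2"
      by (simp add: matrix_vector_mult_scaleR power2_eq_square divide_inverse)
    with le have "x \<bullet> (A *v x) \<le> \<mu> * (norm x)^2" using npos by (simp add: divide_le_eq)
    moreover have "x \<bullet> (A *v x) = \<mu> + 2*t*a + t^2 * (u \<bullet> (A *v u))"
    proof -
      have "v \<bullet> (A *v u) = u \<bullet> (A *v v)" by (metis inner_commute sym_dot[OF symA])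
      then show ?thesis
        by (simp add: x_def matrix_vector_right_distrib matrix_vector_mult_scaleR inner_add_left inner_add_right
           \<mu>_def uAv a_def power2_eq_square algebra_simps)
    qed
    ultimately show ?thesis using nx by (simp add: c_def algebra_simps)
  qed
  have "a = 0" using quad_lemma[OF key] by (simp add: a_def)
  then have u0: "u = 0" by (simp add: a_def)
  then have Av: "A *v v = \<mu> *\<^sub>R v" by (simp add: u_def)
  have vS: "v \<notin> S"
  proof
    assume "v \<in> S" then have "v \<bullet> v = 0" using vT unfolding T_def orthogonal_def by blast
    with vv show False by simp
  qed
  have "eigok A (insert v S)"
    using ok nv Av vT unfolding eigok_def T_def pairwise_insert by (auto simp: orthogonal_commute)
  with vS show ?thesis by blast
qed



lemma spectral:
  fixes A :: "real^'n::finite^'n"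
  assumes symA: "symmetric_mat A"
  shows "\<exists>U d. orthogonal_matrix U \<and> A = U ** diag_mat d ** transpose U"
proof -
  have sA: "transpose A = A" using symA by (simp add: symmetric_mat_def)
  have e0: "eigok A {}" by (simp add: eigok_def)
  obtain S where okS: "eigok A S" and maxS: "\<And>S'. eigok A S' \<Longrightarrow> card S' \<le> card S"
    using Lattices_Big.ex_has_greatest_nat[of "eigok A" "{}" card "CARD('n) + 1"] e0 eigok_card
    by (metis le_imp_less_Suc Suc_eq_plus1)
  have finS: "finite S" using eigok_card[OF okS] by simp
  have spS: "span S = UNIV"
  proof (rule ccontr)
    assume "span S \<noteq> UNIV"
    then obtain v where "v \<notin> S" "eigok A (insert v S)" using eig_extend[OF sA okS] by blast
    then have "card (insert v S) \<le> card S" using maxS by blast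
    with \<open>v \<notin> S\<close> finS show False by simp
  qed
  have "card S = CARD('n)"
    using dim_span_eq_card_independent[OF eigok_indep[OF okS]] spS by simp
  then obtain f where f: "bij_betw f (UNIV::'n set) S"
    by (metis finite_class.finite_UNIV finite_same_card_bij finS)
  have fS: "f j \<in> S" for j using f by (auto simp: bij_betw_def)
  have nf: "norm (f j) = 1" for j using okS fS unfolding eigok_def by blast
  have orth: "orthogonal (f i) (f j)" if "i \<noteq> j" for i j
  proof -
    have "f i \<noteq> f j" using f that by (auto simp: bij_betw_def inj_on_def)
    then show ?thesis using okS fS unfolding eigok_def pairwise_def by blast
  qed
  define d where "d = (\<chi> j. f j \<bullet> (A *v f j))"
  have eig: "A *v f j = (d$j) *\<^sub>R f j" for j
  proof -
    obtain m where m: "A *v f j = m *\<^sub>R f j" using okS fS unfolding eigok_def by blast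
    have "f j \<bullet> f j = 1" using nf by (simp add: norm_eq_1)
    then have "d$j = m" by (simp add: d_def m)
    then show ?thesis using m by simp
  qed
  define U where "U = (\<chi> i j. f j $ i)"
  have oU: "orthogonal_matrix U"
    by (simp add: U_def orthogonal_matrix_orthonormal_columns column_def nf orth)
  have AU: "A ** U = U ** diag_mat d"
  proof -
    have "(A ** U) $ i $ j = (U ** diag_mat d) $ i $ j" for i j
    proof -
      have "(A ** U) $ i $ j = (A *v f j) $ i"
        by (simp add: matrix_matrix_mult_def matrix_vector_mult_def U_def)
      also have "\<dots> = d$j * f j $ i" by (simp add: eig)
      also have "\<dots> = (U ** diag_mat d) $ i $ j" by (simp add: diag_right U_def)
      finally show ?thesis .
    qed
    then show ?thesis by (simp add: vec_eq_iff)
  qed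
  have "A = A ** (U ** transpose U)" using oU by (simp add: orthogonal_matrix_def)
  also have "\<dots> = U ** diag_mat d ** transpose U" by (simp add: matrix_mul_assoc AU)
  finally show ?thesis using oU by blast
qed



lemma orth_c1: "orthogonal_matrix U \<Longrightarrow> X ** transpose U ** U = (X::real^'n::finite^'n)"
  by (simp add: matrix_mul_assoc[symmetric] orthogonal_matrix_def)
lemma orth_c2: "orthogonal_matrix U \<Longrightarrow> X ** U ** transpose U = (X::real^'n::finite^'n)"
  by (simp add: matrix_mul_assoc[symmetric] orthogonal_matrix_def)
lemma orth_c3: "orthogonal_matrix U \<Longrightarrow> transpose U ** U = (mat 1::real^'n::finite^'n)"
  by (simp add: orthogonal_matrix_def)
lemma orth_c4: "orthogonal_matrix U \<Longrightarrow> U ** transpose U = (mat 1::real^'n::finite^'n)"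
  by (simp add: orthogonal_matrix_def)

lemma comm_diag:
  fixes W :: "real^'n::finite^'n"
  assumes "W ** diag_mat d = diag_mat e ** W"
  shows "W ** diag_mat (\<chi> i. f (d$i)) = diag_mat (\<chi> i. f (e$i)) ** W"
proof -
  have h: "W$i$j * d$j = e$i * W$i$j" for i j
    using arg_cong[OF assms, of "\<lambda>M. M$i$j"] by (simp add: diag_right diag_left)
  have "W$i$j * f (d$j) = f (e$i) * W$i$j" for i j
  proof (cases "W$i$j = 0")
    case False
    then have "d$j = e$i" using h[of i j] by (simp add: mult.commute)
    then show ?thesis by simp
  qed simp
  then show ?thesis by (simp add: vec_eq_iff diag_right diag_left)
qed

lemma matfun_eq:
  fixes A U :: "real^'n::finite^'n"
  assumes oU: "orthogonal_matrix U" and A: "A = U ** diag_mat d ** transpose U"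
  shows "matfun f A = U ** diag_mat (\<chi> i. f (d$i)) ** transpose U"
  unfolding matfun_def
proof (rule the_equality)
  show "\<exists>U' d'. orthogonal_matrix U' \<and> A = U' ** diag_mat d' ** transpose U' \<and>
      U ** diag_mat (\<chi> i. f (d$i)) ** transpose U = U' ** diag_mat (\<chi> i. f (d'$i)) ** transpose U'"
    using oU A by blast
next
  fix M assume "\<exists>V e. orthogonal_matrix V \<and> A = V ** diag_mat e ** transpose V \<and>
      M = V ** diag_mat (\<chi> i. f (e$i)) ** transpose V"
  then obtain V e where oV: "orthogonal_matrix V" and AV: "A = V ** diag_mat e ** transpose V"
    and M: "M = V ** diag_mat (\<chi> i. f (e$i)) ** transpose V" by blast
  define W where "W = transpose V ** U"
  have AU: "A ** U = U ** diag_mat d" using oU by (simp add: A orth_c1)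
  have VA: "transpose V ** A = diag_mat e ** transpose V" using oV
    by (simp add: AV matrix_mul_assoc orth_c3)
  have "W ** diag_mat d = transpose V ** (U ** diag_mat d)" by (simp add: W_def matrix_mul_assoc)
  also have "\<dots> = (transpose V ** A) ** U" by (simp add: AU[symmetric] matrix_mul_assoc)
  also have "\<dots> = diag_mat e ** W" by (simp add: VA W_def matrix_mul_assoc)
  finally have WD: "W ** diag_mat (\<chi> i. f (d$i)) = diag_mat (\<chi> i. f (e$i)) ** W" by (rule comm_diag)
  have "M = V ** diag_mat (\<chi> i. f (e$i)) ** transpose V ** U ** transpose U" using oU by (simp add: M orth_c2)
  also have "\<dots> = V ** (diag_mat (\<chi> i. f (e$i)) ** W) ** transpose U" by (simp add: W_def matrix_mul_assoc)
  also have "\<dots> = V ** (W ** diag_mat (\<chi> i. f (d$i))) ** transpose U"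
    by (simp only: WD)
  also have "\<dots> = V ** (transpose V ** U) ** diag_mat (\<chi> i. f (d$i)) ** transpose U"
    by (simp add: W_def matrix_mul_assoc)
  also have "\<dots> = U ** diag_mat (\<chi> i. f (d$i)) ** transpose U" using oV by (simp add: matrix_mul_assoc orth_c4)
  finally show "M = U ** diag_mat (\<chi> i. f (d$i)) ** transpose U" .
qed

lemma spectral_rep:
  fixes A :: "real^'n::finite^'n"
  assumes "symmetric_mat A"
  obtains U d where "orthogonal_matrix U" "A = U ** diag_mat d ** transpose U"
    "\<And>f. matfun f A = U ** diag_mat (\<chi> i. f (d$i)) ** transpose U"
proof -
  obtain U d where "orthogonal_matrix U" "A = U ** diag_mat d ** transpose U" using spectral[OF assms] by blast
  then show ?thesis using that matfun_eq by blast
qed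

lemma conj_sym: "symmetric_mat (U ** diag_mat d ** transpose U)"
  by (simp add: symmetric_mat_def matrix_transpose_mul matrix_mul_assoc)

lemma matfun_sym: "symmetric_mat A \<Longrightarrow> symmetric_mat (matfun f A)"
proof -
  assume "symmetric_mat A"
  then obtain U d where "orthogonal_matrix U" "A = U ** diag_mat d ** transpose U"
    "\<And>f. matfun f A = U ** diag_mat (\<chi> i. f (d$i)) ** transpose U"
    by (rule spectral_rep) blast
  then show ?thesis by (simp add: conj_sym)
qed

lemma diag_mult: "diag_mat a ** diag_mat b = diag_mat (\<chi> i. a$i * b$i)"
  by (simp add: vec_eq_iff diag_right) (simp add: diag_mat_def)

lemma conj_mult: "orthogonal_matrix U \<Longrightarrow>
  (U ** diag_mat a ** transpose U) ** (U ** diag_mat b ** transpose U) = U ** diag_mat (\<chi> i. a$i * b$i) ** transpose U"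
  by (simp add: matrix_mul_assoc orth_c1 diag_mult[symmetric])

lemma conj_add: "(U::real^'n::finite^'n) ** diag_mat a ** transpose U + U ** diag_mat b ** transpose U = U ** diag_mat (\<chi> i. a$i + b$i) ** transpose U"
proof -
  have d: "diag_mat (\<chi> i. a$i + b$i) = diag_mat a + diag_mat b" by (simp add: vec_eq_iff diag_mat_def)
  have r: "(X + Y) ** Z = X ** Z + Y ** (Z::real^'n::finite^'n)" for X Y Z :: "real^'n^'n"
    by (simp add: vec_eq_iff matrix_matrix_mult_def distrib_right sum.distrib)
  show ?thesis by (simp add: d matrix_add_ldistrib r)
qed

lemma conj_scale: "c *\<^sub>R (U ** diag_mat a ** transpose U) = U ** diag_mat (\<chi> i. c * a$i) ** transpose U"
proof -
  have d: "diag_mat (\<chi> i. c * a$i) = c *\<^sub>R diag_mat a" by (simp add: vec_eq_iff diag_mat_def)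
  show ?thesis by (simp add: d scalar_matrix_assoc matrix_scalar_ac)
qed

lemma conj_one: "orthogonal_matrix U \<Longrightarrow> U ** diag_mat (\<chi> i. 1) ** transpose U = mat 1"
proof -
  have d: "diag_mat (\<chi> i. 1) = mat 1" by (simp add: vec_eq_iff diag_mat_def mat_def)
  assume "orthogonal_matrix U" then show ?thesis by (simp add: d orth_c4)
qed

lemma matrix_inv_eq: "(M::real^'n::finite^'n) ** N = mat 1 \<Longrightarrow> N ** M = mat 1 \<Longrightarrow> matrix_inv M = N"
  unfolding matrix_inv_def
proof (rule some_equality)
  assume a: "M ** N = mat 1" "N ** M = mat 1"
  then show "M ** N = mat 1 \<and> N ** M = mat 1" by simp
  fix A' assume b: "M ** A' = mat 1 \<and> A' ** M = mat 1"
  have "A' = A' ** (M ** N)" using a by simp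
  also have "\<dots> = (A' ** M) ** N" by (simp add: matrix_mul_assoc)
  also have "\<dots> = N" using b by simp
  finally show "A' = N" .
qed

lemma step_eq:
  fixes Y :: "real^'n::finite^'n"
  assumes "symmetric_mat Y"
  shows "matrix_inv (mat 1 + matfun exp (\<beta> *\<^sub>R Y)) = matfun (\<lambda>y. 1 / (1 + exp (\<beta> * y))) Y"
proof -
  obtain U d where oU: "orthogonal_matrix U" and Yr: "Y = U ** diag_mat d ** transpose U"
    and mf: "\<And>f. matfun f Y = U ** diag_mat (\<chi> i. f (d$i)) ** transpose U"
    by (rule spectral_rep[OF assms]) blast
  have bY: "\<beta> *\<^sub>R Y = U ** diag_mat (\<chi> i. \<beta> * d$i) ** transpose U" by (simp add: Yr conj_scale)
  have e: "matfun exp (\<beta> *\<^sub>R Y) = U ** diag_mat (\<chi> i. exp (\<beta> * d$i)) ** transpose U"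
    using matfun_eq[OF oU bY] by simp
  have M: "mat 1 + matfun exp (\<beta> *\<^sub>R Y) = U ** diag_mat (\<chi> i. 1 + exp (\<beta> * d$i)) ** transpose U"
    by (simp add: e conj_one[OF oU, symmetric] conj_add)
  define N where "N = U ** diag_mat (\<chi> i. 1 / (1 + exp (\<beta> * d$i))) ** transpose U"
  have p: "(1 + exp (\<beta> * d$i)) * (1 / (1 + exp (\<beta> * d$i))) = 1" for i
  proof -
    have "1 + exp (\<beta> * d$i) > 0" by (simp add: add_pos_pos)
    then show ?thesis by simp
  qed
  have ne: "1 + exp (\<beta> * d$i) \<noteq> 0" for i by (smt (verit) exp_gt_zero)
  have p2: "(1 / (1 + exp (\<beta> * d$i))) * (1 + exp (\<beta> * d$i)) = 1" for i
    using p[of i] by (simp add: mult.commute)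
  have "matrix_inv (mat 1 + matfun exp (\<beta> *\<^sub>R Y)) = N"
    unfolding M N_def
    by (rule matrix_inv_eq) (simp_all add: conj_mult[OF oU] ne conj_one[OF oU])
  then show ?thesis by (simp add: N_def mf)
qed



lemma normsq: "norm (A::real^'n::finite^'m::finite) ^ 2 = (\<Sum>i\<in>UNIV. \<Sum>j\<in>UNIV. (A$i$j)^2)"
  by (simp add: norm_vec_def L2_set_def sum_nonneg)

lemma frob_eq: "frob_norm A = norm A"
  unfolding frob_norm_def by (simp add: normsq[symmetric])

lemma msub_l: "(A::real^'n::finite^'n) ** (B - C) = A ** B - A ** C"
  by (simp add: vec_eq_iff matrix_matrix_mult_def sum_subtractf right_diff_distrib)
lemma msub_r: "((A::real^'n::finite^'n) - B) ** C = A ** C - B ** C"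
  by (simp add: vec_eq_iff matrix_matrix_mult_def sum_subtractf left_diff_distrib)

lemma normsq_trace: "norm (X::real^'n::finite^'n) ^ 2 = trace (transpose X ** X)"
  unfolding normsq trace_def
  by (simp add: matrix_matrix_mult_def transpose_def power2_eq_square) (rule sum.swap)

lemma norm_orth_inv:
  fixes X U V :: "real^'n::finite^'n"
  assumes oU: "orthogonal_matrix U" and oV: "orthogonal_matrix V"
  shows "norm (transpose V ** X ** U) = norm X"
proof -
  have "norm (transpose V ** X ** U) ^ 2 = trace (transpose U ** (transpose X ** X ** U))"
    by (simp add: normsq_trace matrix_transpose_mul matrix_mul_assoc orth_c2[OF oV])
  also have "\<dots> = trace (transpose X ** X ** U ** transpose U)"
    by (rule trace_mul_sym)
  also have "\<dots> = norm X ^ 2" by (simp add: orth_c2[OF oU] normsq_trace)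
  finally show ?thesis by (simp add: power2_eq_iff_nonneg)
qed

lemma matfun_lip:
  fixes A B :: "real^'n::finite^'n"
  assumes sA: "symmetric_mat A" and sB: "symmetric_mat B"
    and lip: "\<And>x y. \<bar>f x - f y\<bar> \<le> L * \<bar>x - y\<bar>"
  shows "norm (matfun f A - matfun f B) \<le> L * norm (A - B)"
proof -
  have "\<bar>f 1 - f 0\<bar> \<le> L" using lip[of 1 0] by simp
  then have L0: "L \<ge> 0" using abs_ge_zero[of "f 1 - f 0"] by linarith
  obtain U d where oU: "orthogonal_matrix U" and Ar: "A = U ** diag_mat d ** transpose U"
    and fA: "\<And>f. matfun f A = U ** diag_mat (\<chi> i. f (d$i)) ** transpose U"
    by (rule spectral_rep[OF sA]) blast
  obtain V e where oV: "orthogonal_matrix V" and Br: "B = V ** diag_mat e ** transpose V"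
    and fB: "\<And>f. matfun f B = V ** diag_mat (\<chi> i. f (e$i)) ** transpose V"
    by (rule spectral_rep[OF sB]) blast
  define W where "W = transpose V ** U"
  have gen: "transpose V ** (U ** diag_mat a ** transpose U - V ** diag_mat b ** transpose V) ** U
      = W ** diag_mat a - diag_mat b ** W" for a b
  proof -
    have 1: "transpose V ** (U ** diag_mat a ** transpose U) ** U = W ** diag_mat a"
      using oU by (simp add: W_def matrix_mul_assoc orth_c1)
    have 2: "transpose V ** (V ** diag_mat b ** transpose V) ** U = diag_mat b ** W"
      using oV by (simp add: W_def matrix_mul_assoc orth_c3)
    show ?thesis by (simp add: msub_l msub_r 1 2)
  qed
  have ent: "(W ** diag_mat a - diag_mat b ** W) $ i $ j = W$i$j * (a$j - b$i)" for a b i j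
    by (simp add: diag_right diag_left algebra_simps)
  have ent2: "(W ** diag_mat a) $ i $ j - (diag_mat b ** W) $ i $ j = W$i$j * (a$j - b$i)" for a b i j
    by (simp add: diag_right diag_left algebra_simps)
  have "norm (matfun f A - matfun f B) ^ 2
      = norm (transpose V ** (matfun f A - matfun f B) ** U) ^ 2"
    using norm_orth_inv[OF oU oV] by simp
  also have "\<dots> = (\<Sum>i\<in>UNIV. \<Sum>j\<in>UNIV. (W$i$j * (f (d$j) - f (e$i)))^2)"
    by (simp add: fA fB gen normsq ent2)
  also have "\<dots> \<le> (\<Sum>i\<in>UNIV. \<Sum>j\<in>UNIV. L^2 * (W$i$j * (d$j - e$i))^2)"
  proof (intro sum_mono)
    fix i j
    have "\<bar>f (d$j) - f (e$i)\<bar> \<le> \<bar>L * (d$j - e$i)\<bar>" using lip[of "d$j" "e$i"] L0 by (simp add: abs_mult)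
    then have h: "(f (d$j) - f (e$i))^2 \<le> (L * (d$j - e$i))^2" by (simp add: abs_le_square_iff)
    have e1: "(W$i$j * (f (d$j) - f (e$i)))^2 = (W$i$j)^2 * (f (d$j) - f (e$i))^2" by (simp add: power_mult_distrib)
    have e2: "L^2 * (W$i$j * (d$j - e$i))^2 = (W$i$j)^2 * (L * (d$j - e$i))^2" by (simp add: power_mult_distrib)
    show "(W$i$j * (f (d$j) - f (e$i)))^2 \<le> L^2 * (W$i$j * (d$j - e$i))^2"
      unfolding e1 e2 by (rule mult_left_mono[OF h]) simp
  qed
  also have "\<dots> = L^2 * norm (transpose V ** (A - B) ** U) ^ 2"
    by (simp add: Ar Br gen normsq ent2 sum_distrib_left)
  also have "\<dots> = (L * norm (A - B))^2"
    using norm_orth_inv[OF oU oV] by (simp add: power_mult_distrib)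
  finally show ?thesis using L0 by (simp add: power2_le_iff_abs_le)
qed

lemma sigmoid_lip:
  fixes \<beta> :: real
  assumes b: "\<beta> > 0"
  shows "\<bar>1 / (1 + exp (\<beta> * x)) - 1 / (1 + exp (\<beta> * y))\<bar> \<le> \<beta> / 4 * \<bar>x - y\<bar>"
proof -
  define g where "g = (\<lambda>y. 1 / (1 + exp (\<beta> * y)))"
  define g' where "g' = (\<lambda>y. - (\<beta> * exp (\<beta> * y)) / (1 + exp (\<beta> * y))^2)"
  have der: "DERIV g z :> g' z" for z
  proof -
    have ne: "1 + exp (\<beta> * z) \<noteq> 0" by (smt (verit) exp_gt_zero)
    have d1: "DERIV (\<lambda>y. 1 + exp (\<beta> * y)) z :> \<beta> * exp (\<beta> * z)"
      by (auto intro!: derivative_eq_intros)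
    have "DERIV (\<lambda>y. inverse (1 + exp (\<beta> * y))) z :> - ((\<beta> * exp (\<beta> * z)) * inverse ((1 + exp (\<beta> * z)) ^ Suc (Suc 0)))"
      by (rule DERIV_inverse_fun[OF d1 ne])
    then show ?thesis unfolding g_def g'_def by (simp add: divide_inverse power2_eq_square)
  qed
  have bd: "\<bar>g' z\<bar> \<le> \<beta> / 4" for z
  proof -
    define E where "E = exp (\<beta> * z)"
    have E: "E > 0" by (simp add: E_def)
    have "(1+E)^2 - 4*E = (E-1)^2" by (simp add: power2_eq_square algebra_simps)
    then have h4: "4 * E \<le> (1 + E)^2" using zero_le_power2[of "E - 1"] by linarith
    then have "\<beta> * (4 * E) \<le> \<beta> * (1 + E)^2" using b by (intro mult_left_mono) auto
    moreover have "(1 + E)^2 > 0" using E by simp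
    ultimately have "\<beta> * E / (1 + E)^2 \<le> \<beta> / 4" by (simp add: pos_divide_le_eq)
    then show ?thesis using E b by (simp add: g'_def E_def[symmetric] abs_div)
  qed
  have main: "\<bar>g a - g c\<bar> \<le> \<beta> / 4 * \<bar>a - c\<bar>" if lt: "a < c" for a c
  proof -
    obtain z where eq: "g c - g a = (c - a) * g' z" using MVT2[OF lt, of g g'] der by blast
    have "\<bar>g a - g c\<bar> = \<bar>g c - g a\<bar>" by (rule abs_minus_commute)
    also have "\<dots> = \<bar>(c - a) * g' z\<bar>" using eq by simp
    also have "\<dots> = \<bar>c - a\<bar> * \<bar>g' z\<bar>" by (rule abs_mult)
    also have "\<dots> \<le> \<bar>c - a\<bar> * (\<beta> / 4)" by (rule mult_left_mono[OF bd]) simp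
    finally show ?thesis by (simp add: abs_minus_commute mult.commute)
  qed
  have "\<bar>g x - g y\<bar> \<le> \<beta> / 4 * \<bar>x - y\<bar>"
  proof (cases x y rule: linorder_cases)
    case less then show ?thesis by (rule main)
  next
    case equal then show ?thesis by simp
  next
    case greater then show ?thesis using main[of y x] by (simp add: abs_minus_commute)
  qed
  then show ?thesis by (simp add: g_def)
qed



lemma transpose_add': "transpose ((A::real^'n::finite^'n) + B) = transpose A + transpose B"
  by (simp add: transpose_def vec_eq_iff)
lemma transpose_diff': "transpose ((A::real^'n::finite^'n) - B) = transpose A - transpose B"
  by (simp add: transpose_def vec_eq_iff)

lemma sym_add: "symmetric_mat A \<Longrightarrow> symmetric_mat B \<Longrightarrow> symmetric_mat ((A::real^'n::finite^'n) + B)"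
  by (simp add: symmetric_mat_def transpose_add')
lemma sym_diff: "symmetric_mat A \<Longrightarrow> symmetric_mat B \<Longrightarrow> symmetric_mat ((A::real^'n::finite^'n) - B)"
  by (simp add: symmetric_mat_def transpose_diff')
lemma sym_scale: "symmetric_mat A \<Longrightarrow> symmetric_mat (c *\<^sub>R (A::real^'n::finite^'n))"
  by (simp add: symmetric_mat_def transpose_scalar)
lemma sym_one: "symmetric_mat (mat 1 :: real^'n::finite^'n)"
  by (simp add: symmetric_mat_def)

lemma dot_conj: "x \<bullet> ((U ** M ** transpose U) *v x) = (transpose U *v x) \<bullet> (M *v (transpose U *v x))"
  for U M :: "real^'n::finite^'n"
  by (metis dot_lmul_matrix matrix_vector_mul_assoc transpose_matrix_vector)

lemma dot_diag: "z \<bullet> (diag_mat d *v z) = (\<Sum>i\<in>UNIV. d$i * (z$i)^2)"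
proof -
  have "(diag_mat d *v z) $ i = d$i * z$i" for i
  proof -
    have "(\<Sum>j\<in>UNIV. (if i = j then d$i else 0) * z$j) = (\<Sum>j\<in>UNIV. if i = j then d$i * z$j else 0)"
      by (rule sum.cong) auto
    then show ?thesis by (simp add: matrix_vector_mult_def diag_mat_def)
  qed
  then show ?thesis by (simp add: inner_vec_def power2_eq_square mult_ac)
qed

lemma one_minus_conj: "orthogonal_matrix U \<Longrightarrow>
  mat 1 - U ** diag_mat d ** transpose U = U ** diag_mat (\<chi> i. 1 - d$i) ** transpose U"
proof -
  assume oU: "orthogonal_matrix U"
  have "mat 1 - U ** diag_mat d ** transpose U = U ** diag_mat (\<chi> i. 1) ** transpose U + (-1) *\<^sub>R (U ** diag_mat d ** transpose U)"
    by (simp add: conj_one[OF oU])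
  also have "\<dots> = U ** diag_mat (\<chi> i. 1 - d$i) ** transpose U"
    by (simp add: conj_scale conj_add)
  finally show ?thesis .
qed

lemma psd_conj: "(\<And>i. 0 \<le> c$i) \<Longrightarrow> psd (U ** diag_mat c ** transpose U)"
  for U :: "real^'n::finite^'n"
  unfolding psd_def using conj_sym
  by (simp add: dot_conj dot_diag sum_nonneg)

lemma feasible_conj:
  fixes U :: "real^'n::finite^'n"
  assumes oU: "orthogonal_matrix U" and e: "\<And>i. 0 \<le> e$i \<and> e$i \<le> 1"
  shows "feasible (U ** diag_mat e ** transpose U)"
proof -
  have 1: "psd (U ** diag_mat e ** transpose U)" by (rule psd_conj) (use e in auto)
  have 2: "psd (U ** diag_mat (\<chi> i. 1 - e$i) ** transpose U)" by (rule psd_conj) (use e in auto)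
  show ?thesis unfolding feasible_def loewner_le_def using 1 2 conj_sym one_minus_conj[OF oU] by simp
qed

lemma feasible_eig:
  fixes U P :: "real^'n::finite^'n"
  assumes oU: "orthogonal_matrix U" and P: "P = U ** diag_mat d ** transpose U" and f: "feasible P"
  shows "0 \<le> d$j \<and> d$j \<le> 1"
proof -
  define x where "x = U *v axis j 1"
  have tx: "transpose U *v x = axis j 1" using oU
    by (simp add: x_def matrix_vector_mul_assoc orth_c3)
  have ax: "axis j 1 \<bullet> (diag_mat c *v axis j 1) = c$j" for c :: "real^'n"
  proof -
    have "(\<Sum>i\<in>UNIV. c$i * (axis j (1::real) $ i)^2) = (\<Sum>i\<in>UNIV. if i = j then c$i else 0)"
      by (rule sum.cong) (auto simp: axis_def)
    then show ?thesis by (simp add: dot_diag)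
  qed
  have "0 \<le> x \<bullet> (P *v x)" using f unfolding feasible_def loewner_le_def psd_def by simp
  then have 1: "0 \<le> d$j" by (simp only: P dot_conj tx ax)
  have "0 \<le> x \<bullet> ((mat 1 - P) *v x)" using f unfolding feasible_def loewner_le_def psd_def by simp
  then have "0 \<le> (\<chi> i. 1 - d$i) $ j" by (simp only: P one_minus_conj[OF oU] dot_conj tx ax)
  then have 2: "0 \<le> 1 - d$j" by simp
  from 1 2 show ?thesis by simp
qed

lemma trace_conj: "orthogonal_matrix U \<Longrightarrow> trace (U ** M ** transpose U) = trace (M::real^'n::finite^'n)"
proof -
  assume oU: "orthogonal_matrix U"
  have "trace ((U ** M) ** transpose U) = trace (transpose U ** (U ** M))" by (rule trace_mul_sym)
  also have "\<dots> = trace M" by (simp add: matrix_mul_assoc orth_c3[OF oU])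
  finally show ?thesis .
qed

lemma trace_diag: "trace (diag_mat d) = (\<Sum>i\<in>UNIV. d$i)"
  by (simp add: trace_def diag_mat_def)

definition phi :: "real \<Rightarrow> real" where "phi x = xlnx x + xlnx (1 - x)"

definition ent :: "real^'n::finite^'n \<Rightarrow> real" where
  "ent P = trace (matfun xlnx P + matfun xlnx (mat 1 - P))"

lemma ent_conj:
  fixes U P :: "real^'n::finite^'n"
  assumes oU: "orthogonal_matrix U" and P: "P = U ** diag_mat d ** transpose U"
  shows "ent P = (\<Sum>i\<in>UNIV. phi (d$i))"
proof -
  have m1: "matfun xlnx P = U ** diag_mat (\<chi> i. xlnx (d$i)) ** transpose U" by (rule matfun_eq[OF oU P])
  have m2: "matfun xlnx (mat 1 - P) = U ** diag_mat (\<chi> i. xlnx (1 - d$i)) ** transpose U"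
    using matfun_eq[OF oU one_minus_conj[OF oU, of d, folded P]] by simp
  show ?thesis
    by (simp add: ent_def m1 m2 trace_add trace_conj[OF oU] trace_diag phi_def sum.distrib)
qed

lemma xlog_ineq: "0 \<le> x \<Longrightarrow> 0 < y \<Longrightarrow> x * ln y - xlnx x \<le> y - x"
proof (cases "x = 0")
  case False
  assume x: "0 \<le> x" and y: "0 < y"
  then have x': "x > 0" using False by simp
  have "ln (y / x) \<le> y / x - 1" by (rule ln_le_minus_one) (simp add: x' y)
  then have "x * ln (y / x) \<le> x * (y / x - 1)" using x' by (simp add: mult_left_mono)
  then show ?thesis using x' y by (simp add: xlnx_def ln_div right_diff_distrib)
qed (simp add: xlnx_def)

lemma scalar_klein:
  assumes a: "0 \<le> a" "a \<le> 1"
  shows "0 \<le> phi a - phi (1 / (1 + exp t)) + t * (a - 1 / (1 + exp t))"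
proof -
  define b where "b = 1 / (1 + exp t)"
  define L where "L = ln (1 + exp t)"
  have pos: "1 + exp t > 0" by (simp add: add_pos_pos)
  have b0: "0 < b" by (simp add: b_def pos)
  have ne: "1 + exp t \<noteq> 0" using pos by linarith
  have b1: "1 - b = exp t / (1 + exp t)" using ne by (simp add: b_def field_simps)
  have b1p: "0 < 1 - b" by (simp add: b1 pos)
  have lnb: "ln b = - L" by (simp add: b_def L_def ln_div pos ne)
  have lnb1: "ln (1 - b) = t - L" by (simp add: b1 L_def ln_div pos ne)
  have pb: "phi b = - L + (1 - b) * t"
    using b0 b1p by (simp add: phi_def xlnx_def lnb lnb1 algebra_simps)
  have i1: "a * ln b - xlnx a \<le> b - a" by (rule xlog_ineq) (use a b0 in auto)
  have i2: "(1 - a) * ln (1 - b) - xlnx (1 - a) \<le> (1 - b) - (1 - a)" by (rule xlog_ineq) (use a b1p in auto)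
  have "phi a \<ge> a * ln b + (1 - a) * ln (1 - b)" using i1 i2 unfolding phi_def by linarith
  then have "phi a \<ge> - L + (1 - a) * t" by (simp add: lnb lnb1 algebra_simps)
  then show ?thesis unfolding b_def[symmetric] using pb by (simp add: algebra_simps)
qed



lemma mult_trans_diag: "((X::real^'n::finite^'n) ** transpose W) $ i $ i = (\<Sum>k\<in>UNIV. X$i$k * W$i$k)"
  by (simp add: matrix_matrix_mult_def transpose_def)

lemma trace_form: "trace (diag_mat y ** W ** diag_mat d ** transpose W) = (\<Sum>i\<in>UNIV. \<Sum>j\<in>UNIV. y$i * (W$i$j)^2 * d$j)"
  for W :: "real^'n::finite^'n"
  unfolding trace_def by (simp add: mult_trans_diag diag_right diag_left power2_eq_square mult_ac)

lemma orth_rowsum: "orthogonal_matrix (W::real^'n::finite^'n) \<Longrightarrow> (\<Sum>j\<in>UNIV. (W$i$j)^2) = 1"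
proof -
  assume "orthogonal_matrix W"
  then have "(W ** transpose W) $ i $ i = 1" by (simp add: orth_c4 mat_def)
  then show ?thesis by (simp add: mult_trans_diag power2_eq_square)
qed

lemma orth_colsum: "orthogonal_matrix (W::real^'n::finite^'n) \<Longrightarrow> (\<Sum>i\<in>UNIV. (W$i$j)^2) = 1"
proof -
  assume "orthogonal_matrix W"
  then have "orthogonal_matrix (transpose W)" by simp
  from orth_rowsum[OF this, of j] show ?thesis by (simp add: transpose_def)
qed

lemma klein:
  fixes Y0 P :: "real^'n::finite^'n"
  assumes b: "\<beta> > 0" and sY: "symmetric_mat Y0"
    and P0: "P0 = matfun (\<lambda>y. 1 / (1 + exp (\<beta> * y))) Y0" and f: "feasible P"
  shows "0 \<le> \<beta> * trace (Y0 ** (P - P0)) + ent P - ent P0"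
proof -
  obtain V y where oV: "orthogonal_matrix V" and Yr: "Y0 = V ** diag_mat y ** transpose V"
    and fY: "\<And>f. matfun f Y0 = V ** diag_mat (\<chi> i. f (y$i)) ** transpose V"
    by (rule spectral_rep[OF sY]) blast
  define e where "e = (\<chi> i. 1 / (1 + exp (\<beta> * y$i)))"
  have P0r: "P0 = V ** diag_mat e ** transpose V" by (simp add: P0 fY e_def)
  have sP: "symmetric_mat P" using f by (simp add: feasible_def)
  obtain U d where oU: "orthogonal_matrix U" and Pr: "P = U ** diag_mat d ** transpose U"
    using spectral[OF sP] by blast
  have dB: "0 \<le> d$j \<and> d$j \<le> 1" for j by (rule feasible_eig[OF oU Pr f])
  define W where "W = transpose V ** U"
  have oW: "orthogonal_matrix W" unfolding W_def using oU oV by (simp add: orthogonal_matrix_mul)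
  have tW: "transpose W = transpose U ** V" by (simp add: W_def matrix_transpose_mul)
  have PV: "P = V ** (W ** diag_mat d ** transpose W) ** transpose V"
    by (simp add: Pr W_def matrix_transpose_mul matrix_mul_assoc orth_c2[OF oV] orth_c4[OF oV])
  have S1: "trace (Y0 ** P) = (\<Sum>i\<in>UNIV. \<Sum>j\<in>UNIV. y$i * (W$i$j)^2 * d$j)"
  proof -
    have "Y0 ** P = V ** (diag_mat y ** W ** diag_mat d ** transpose W) ** transpose V"
      by (simp add: Yr PV matrix_mul_assoc orth_c1[OF oV])
    then show ?thesis by (simp add: trace_conj[OF oV] trace_form)
  qed
  have S2: "trace (Y0 ** P0) = (\<Sum>i\<in>UNIV. y$i * e$i)"
    by (simp add: Yr P0r conj_mult[OF oV] trace_conj[OF oV] trace_diag)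
  have E1: "ent P = (\<Sum>i\<in>UNIV. \<Sum>j\<in>UNIV. (W$i$j)^2 * phi (d$j))"
  proof -
    have "ent P = (\<Sum>j\<in>UNIV. (\<Sum>i\<in>UNIV. (W$i$j)^2) * phi (d$j))"
      by (simp add: ent_conj[OF oU Pr] orth_colsum[OF oW])
    also have "\<dots> = (\<Sum>i\<in>UNIV. \<Sum>j\<in>UNIV. (W$i$j)^2 * phi (d$j))"
      by (simp add: sum_distrib_right) (rule sum.swap)
    finally show ?thesis .
  qed
  have E2: "ent P0 = (\<Sum>i\<in>UNIV. \<Sum>j\<in>UNIV. (W$i$j)^2 * phi (e$i))"
    by (simp add: ent_conj[OF oV P0r] orth_rowsum[OF oW] sum_distrib_right[symmetric])
  have S2': "(\<Sum>i\<in>UNIV. y$i * e$i) = (\<Sum>i\<in>UNIV. \<Sum>j\<in>UNIV. (W$i$j)^2 * (y$i * e$i))"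
    by (simp add: orth_rowsum[OF oW] sum_distrib_right[symmetric])
  have "\<beta> * trace (Y0 ** (P - P0)) + ent P - ent P0
      = (\<Sum>i\<in>UNIV. \<Sum>j\<in>UNIV. \<beta> * (y$i * (W$i$j)^2 * d$j) - \<beta> * ((W$i$j)^2 * (y$i * e$i))
            + (W$i$j)^2 * phi (d$j) - (W$i$j)^2 * phi (e$i))"
    by (simp add: msub_l trace_sub S1 S2 S2' E1 E2 sum.distrib sum_subtractf sum_distrib_left right_diff_distrib)
  also have "\<dots> = (\<Sum>i\<in>UNIV. \<Sum>j\<in>UNIV. (W$i$j)^2 *
        (phi (d$j) - phi (1 / (1 + exp (\<beta> * y$i))) + (\<beta> * y$i) * (d$j - 1 / (1 + exp (\<beta> * y$i)))))"
    by (intro sum.cong refl) (simp add: e_def algebra_simps)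
  also have "\<dots> \<ge> 0"
    by (intro sum_nonneg mult_nonneg_nonneg zero_le_power2 scalar_klein) (use dB in auto)
  finally show ?thesis .
qed



lemma inner_trace:
  fixes X C :: "real^'n::finite^'n"
  assumes sC: "symmetric_mat C"
  shows "X \<bullet> C = trace (C ** X)"
proof -
  have c: "C$i$k = C$k$i" for i k
  proof -
    have "(transpose C)$k$i = C$k$i" using sC by (simp add: symmetric_mat_def)
    then show ?thesis by (simp add: transpose_def)
  qed
  have "trace (C ** X) = (\<Sum>i\<in>UNIV. \<Sum>k\<in>UNIV. C$i$k * X$k$i)" by (simp add: trace_def matrix_matrix_mult_def)
  also have "\<dots> = (\<Sum>i\<in>UNIV. \<Sum>k\<in>UNIV. C$k$i * X$k$i)" by (intro sum.cong refl) (metis c)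
  also have "\<dots> = (\<Sum>k\<in>UNIV. \<Sum>i\<in>UNIV. C$k$i * X$k$i)" by (rule sum.swap)
  also have "\<dots> = X \<bullet> C" by (simp add: inner_vec_def mult.commute)
  finally show ?thesis by simp
qed

lemma trace_scale: "trace (c *\<^sub>R (M::real^'n::finite^'n)) = c * trace M"
  by (simp add: trace_def sum_distrib_left)

lemma mrdist: "((A::real^'n::finite^'n) + B) ** X = A ** X + B ** X"
  by (simp add: vec_eq_iff matrix_matrix_mult_def distrib_right sum.distrib)

lemma norm_transpose: "norm (transpose (M::real^'n::finite^'n)) = norm M"
proof -
  have "norm (transpose M) ^ 2 = norm M ^ 2"
    by (simp add: normsq transpose_def) (rule sum.swap)
  then show ?thesis by (simp add: power2_eq_iff_nonneg)
qed

lemma quad_expand: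
  fixes X C :: "real^'n::finite^'n"
  assumes sC: "symmetric_mat C" and l: "l \<ge> 0"
  shows "l / 2 * frob_norm (X + C) ^ 2 \<ge> l / 2 * frob_norm C ^ 2 + l * trace (C ** X)"
proof -
  have e: "norm (X + C) ^ 2 = norm X ^ 2 + norm C ^ 2 + 2 * trace (C ** X)"
    using dot_norm[of X C] inner_trace[OF sC, of X] by simp
  have "l / 2 * frob_norm (X + C) ^ 2 - (l / 2 * frob_norm C ^ 2 + l * trace (C ** X)) = l / 2 * norm X ^ 2"
    by (simp only: frob_eq e) (simp add: algebra_simps)
  moreover have "l / 2 * norm X ^ 2 \<ge> 0" using l by simp
  ultimately show ?thesis by linarith
qed

definition Yf :: "'n::finite sqmat \<Rightarrow> 'n sqmat \<Rightarrow> 'n sqmat \<Rightarrow> 'n sqmat \<Rightarrow> 'n sqmat \<Rightarrow> real \<Rightarrow> real \<Rightarrow> 'n sqmat \<Rightarrow> 'n sqmat"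
  where "Yf H Q R B D lam r X = H + lam *\<^sub>R (X - Q + B) + r *\<^sub>R (X - R + D)"

lemma Yf_sym: "symmetric_mat H \<Longrightarrow> symmetric_mat Q \<Longrightarrow> symmetric_mat R \<Longrightarrow> symmetric_mat B \<Longrightarrow> symmetric_mat D
  \<Longrightarrow> symmetric_mat X \<Longrightarrow> symmetric_mat (Yf H Q R B D lam r X)"
  unfolding Yf_def by (intro sym_add sym_scale sym_diff) auto

lemma Yf_diff: "Yf H Q R B D lam r X - Yf H Q R B D lam r X' = (lam + r) *\<^sub>R (X - X')"
  unfolding Yf_def by (simp add: algebra_simps)

lemma obj_ineq:
  fixes H Q R B D P P0 :: "real^'n::finite^'n"
  assumes sH: "symmetric_mat H" and sQ: "symmetric_mat Q" and sR: "symmetric_mat R"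
    and sB: "symmetric_mat B" and sD: "symmetric_mat D"
    and b: "\<beta> > 0" and l: "lam > 0" and r: "r > 0"
    and sP0: "symmetric_mat P0"
    and fix0: "P0 = matfun (\<lambda>y. 1 / (1 + exp (\<beta> * y))) (Yf H Q R B D lam r P0)"
    and f: "feasible P"
  shows "objective H Q R B D \<beta> lam r P0 \<le> objective H Q R B D \<beta> lam r P"
proof -
  define X where "X = P - P0"
  define C1 where "C1 = P0 - Q + B"
  define C2 where "C2 = P0 - R + D"
  define Y0 where "Y0 = Yf H Q R B D lam r P0"
  have sC1: "symmetric_mat C1" unfolding C1_def by (intro sym_add sym_diff sP0 sQ sB)
  have sC2: "symmetric_mat C2" unfolding C2_def by (intro sym_add sym_diff sP0 sR sD)
  have sY0: "symmetric_mat Y0" unfolding Y0_def by (rule Yf_sym[OF sH sQ sR sB sD sP0])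
  have k: "0 \<le> \<beta> * trace (Y0 ** X) + ent P - ent P0"
    unfolding X_def by (rule klein[OF b sY0 _ f]) (simp add: Y0_def fix0[symmetric])
  have k2: "0 \<le> trace (Y0 ** X) + (1 / \<beta>) * (ent P - ent P0)"
  proof -
    have "0 \<le> (1 / \<beta>) * (\<beta> * trace (Y0 ** X) + ent P - ent P0)" using k b by simp
    also have "\<dots> = trace (Y0 ** X) + (1 / \<beta>) * (ent P - ent P0)" using b by (simp add: field_simps)
    finally show ?thesis .
  qed
  have tY: "trace (Y0 ** X) = trace (H ** X) + lam * trace (C1 ** X) + r * trace (C2 ** X)"
    by (simp add: Y0_def Yf_def C1_def C2_def mrdist trace_add scalar_matrix_assoc[symmetric] trace_scale)
  have tH: "trace (H ** P) = trace (H ** P0) + trace (H ** X)"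
    by (simp add: X_def msub_l trace_sub)
  have q1: "lam / 2 * frob_norm (P - Q + B) ^ 2 \<ge> lam / 2 * frob_norm (P0 - Q + B) ^ 2 + lam * trace (C1 ** X)"
  proof -
    have eq: "P - Q + B = X + C1" by (simp add: X_def C1_def algebra_simps)
    have eq2: "frob_norm (P0 - Q + B) = frob_norm C1" by (simp add: C1_def)
    show ?thesis unfolding eq eq2 using quad_expand[OF sC1, of lam X] l by simp
  qed
  have q2: "r / 2 * frob_norm (P - R + D) ^ 2 \<ge> r / 2 * frob_norm (P0 - R + D) ^ 2 + r * trace (C2 ** X)"
  proof -
    have eq: "P - R + D = X + C2" by (simp add: X_def C2_def algebra_simps)
    have eq2: "frob_norm (P0 - R + D) = frob_norm C2" by (simp add: C2_def)
    show ?thesis unfolding eq eq2 using quad_expand[OF sC2, of r X] r by simp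
  qed
  have eP: "(1 / \<beta>) * ent P = (1 / \<beta>) * ent P0 + (1 / \<beta>) * (ent P - ent P0)" by (simp add: algebra_simps)
  show ?thesis
    unfolding objective_def ent_def[symmetric]
    using k2 tY tH q1 q2 eP by linarith
qed



lemma sigmoid_range: "0 < 1 / (1 + exp t) \<and> 1 / (1 + exp t) < (1::real)"
proof -
  have "1 + exp t > 1" by simp
  moreover have "1 + exp t > 0" by (simp add: add_pos_pos)
  ultimately show ?thesis by (simp add: divide_less_eq)
qed

lemma sigmoid_feasible:
  assumes "symmetric_mat (Y::real^'n::finite^'n)"
  shows "feasible (matfun (\<lambda>y. 1 / (1 + exp (\<beta> * y))) Y)"
proof -
  obtain V y where oV: "orthogonal_matrix V"
    and fY: "\<And>f. matfun f Y = V ** diag_mat (\<chi> i. f (y$i)) ** transpose V"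
    by (rule spectral_rep[OF assms]) blast
  show ?thesis unfolding fY
    by (rule feasible_conj[OF oV]) (use sigmoid_range in \<open>auto simp: less_imp_le\<close>)
qed

lemma sigmoid_lip_mat:
  assumes b: "\<beta> > 0" and "symmetric_mat A" "symmetric_mat (B::real^'n::finite^'n)"
  shows "norm (matfun (\<lambda>y. 1 / (1 + exp (\<beta> * y))) A - matfun (\<lambda>y. 1 / (1 + exp (\<beta> * y))) B)
         \<le> \<beta> / 4 * norm (A - B)"
  by (rule matfun_lip[OF assms(2,3)]) (rule sigmoid_lip[OF b])

lemma fixed_point_exists:
  fixes H Q R B D :: "real^'n::finite^'n"
  assumes sH: "symmetric_mat H" and sQ: "symmetric_mat Q" and sR: "symmetric_mat R"
    and sB: "symmetric_mat B" and sD: "symmetric_mat D"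
    and b: "\<beta> > 0" and l: "lam > 0" and r: "r > 0" and c: "\<beta> * (lam + r) < 4"
  shows "\<exists>P0. symmetric_mat P0 \<and> P0 = matfun (\<lambda>y. 1 / (1 + exp (\<beta> * y))) (Yf H Q R B D lam r P0)"
proof -
  define s where "s = (\<lambda>y::real. 1 / (1 + exp (\<beta> * y)))"
  define sy where "sy = (\<lambda>X::real^'n^'n. (1/2) *\<^sub>R (X + transpose X))"
  define F where "F = (\<lambda>X. matfun s (Yf H Q R B D lam r (sy X)))"
  have ssy: "symmetric_mat (sy X)" for X
    by (simp add: sy_def symmetric_mat_def transpose_scalar transpose_add' add.commute)
  have sYf: "symmetric_mat (Yf H Q R B D lam r (sy X))" for X by (rule Yf_sym[OF sH sQ sR sB sD ssy])
  have nsy: "norm (sy X - sy X') \<le> norm (X - X')" for X X'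
  proof -
    have "sy X - sy X' = (1/2) *\<^sub>R ((X - X') + transpose (X - X'))"
      by (simp add: sy_def transpose_diff' algebra_simps)
    then have "norm (sy X - sy X') = (1/2) * norm ((X - X') + transpose (X - X'))" by simp
    also have "\<dots> \<le> (1/2) * (norm (X - X') + norm (transpose (X - X')))"
      by (intro mult_left_mono norm_triangle_ineq) auto
    also have "\<dots> = norm (X - X')" by (simp add: norm_transpose)
    finally show ?thesis .
  qed
  define k where "k = \<beta> / 4 * (lam + r)"
  have k0: "0 \<le> k" using b l r by (simp add: k_def)
  have k1: "k < 1" using c by (simp add: k_def)
  have "\<forall>x y. dist (F x) (F y) \<le> k * dist x y"
  proof (intro allI)
    fix x y :: "real^'n^'n"
    have "dist (F x) (F y) \<le> \<beta> / 4 * norm (Yf H Q R B D lam r (sy x) - Yf H Q R B D lam r (sy y))"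
      unfolding dist_norm F_def s_def by (rule sigmoid_lip_mat[OF b sYf sYf])
    also have "\<dots> = k * norm (sy x - sy y)" using l r by (simp add: Yf_diff k_def)
    also have "\<dots> \<le> k * norm (x - y)" by (rule mult_left_mono[OF nsy k0])
    finally show "dist (F x) (F y) \<le> k * dist x y" by (simp add: dist_norm)
  qed
  then obtain P0 where P0: "F P0 = P0" using banach_fix_type[OF k0 k1] by blast
  have sP0: "symmetric_mat P0" using P0 matfun_sym[OF sYf] unfolding F_def by metis
  then have "sy P0 = P0" by (simp add: sy_def symmetric_mat_def scaleR_2[symmetric])
  then have "P0 = matfun s (Yf H Q R B D lam r P0)" using P0 unfolding F_def by simp
  then show ?thesis using sP0 unfolding s_def by blast
qed

theorem proposition3:
  fixes H Q R B D Zstar :: "real^'n::finite^'n"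
    and Z Y :: "nat \<Rightarrow> real^'n^'n"
    and \<beta> lam r :: real
  assumes symH: "symmetric_mat H" and symQ: "symmetric_mat Q" and symR: "symmetric_mat R"
    and symB: "symmetric_mat B" and symD: "symmetric_mat D"
    and \<beta>_pos: "\<beta> > 0" and lam_pos: "lam > 0" and r_pos: "r > 0"
    and contr: "\<beta> * (lam + r) < 4"
    and Zstar_feas: "feasible Zstar"
    and Zstar_min: "\<And>P. feasible P \<Longrightarrow>
                      objective H Q R B D \<beta> lam r Zstar \<le> objective H Q R B D \<beta> lam r P"
    and Zstar_unique: "\<And>P. feasible P \<Longrightarrow>
                      objective H Q R B D \<beta> lam r P \<le> objective H Q R B D \<beta> lam r Zstar \<Longrightarrow> P = Zstar"
    and symZ0: "symmetric_mat (Z 0)"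
    and Y_def: "\<And>l. Y l = H + lam *\<^sub>R (Z l - Q + B) + r *\<^sub>R (Z l - R + D)"
    and Z_step: "\<And>l. Z (Suc l) = matrix_inv (mat 1 + matfun exp (\<beta> *\<^sub>R Y l))"
  shows "\<forall>l. frob_norm (Z l - Zstar) \<le> (\<beta> * (lam + r) / 4) ^ l * frob_norm (Z 0 - Zstar)"
proof -
  define s where "s = (\<lambda>y::real. 1 / (1 + exp (\<beta> * y)))"
  obtain P0 where sP0: "symmetric_mat P0" and fix0: "P0 = matfun s (Yf H Q R B D lam r P0)"
    using fixed_point_exists[OF symH symQ symR symB symD \<beta>_pos lam_pos r_pos contr] unfolding s_def by blast
  have "feasible (matfun s (Yf H Q R B D lam r P0))" unfolding s_def
    by (rule sigmoid_feasible) (rule Yf_sym[OF symH symQ symR symB symD sP0])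
  then have fP0: "feasible P0" using fix0 by simp
  have "objective H Q R B D \<beta> lam r P0 \<le> objective H Q R B D \<beta> lam r Zstar"
    by (rule obj_ineq[OF symH symQ symR symB symD \<beta>_pos lam_pos r_pos sP0 _ Zstar_feas])
       (use fix0 in \<open>simp add: s_def\<close>)
  then have P0Z: "P0 = Zstar" using Zstar_unique[OF fP0] by blast
  have YY: "Y l = Yf H Q R B D lam r (Z l)" for l by (simp add: Y_def Yf_def)
  have symZ: "symmetric_mat (Z l)" for l
  proof (induction l)
    case 0 then show ?case by (rule symZ0)
  next
    case (Suc l)
    have sY: "symmetric_mat (Y l)" unfolding YY by (rule Yf_sym[OF symH symQ symR symB symD Suc])
    show ?case unfolding Z_step step_eq[OF sY] by (rule matfun_sym[OF sY])
  qed
  have step: "frob_norm (Z (Suc l) - Zstar) \<le> (\<beta> * (lam + r) / 4) * frob_norm (Z l - Zstar)" for l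
  proof -
    have sY: "symmetric_mat (Y l)" unfolding YY by (rule Yf_sym[OF symH symQ symR symB symD symZ])
    have sYs: "symmetric_mat (Yf H Q R B D lam r Zstar)"
      using P0Z sP0 Yf_sym[OF symH symQ symR symB symD] by blast
    have "frob_norm (Z (Suc l) - Zstar) = norm (matfun s (Y l) - matfun s (Yf H Q R B D lam r Zstar))"
      using fix0 P0Z by (simp add: frob_eq Z_step step_eq[OF sY] s_def)
    also have "\<dots> \<le> \<beta> / 4 * norm (Y l - Yf H Q R B D lam r Zstar)"
      unfolding s_def by (rule sigmoid_lip_mat[OF \<beta>_pos sY sYs])
    also have "\<dots> = (\<beta> * (lam + r) / 4) * frob_norm (Z l - Zstar)"
      using lam_pos r_pos by (simp add: YY Yf_diff frob_eq)
    finally show ?thesis .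
  qed
  have c0: "0 \<le> \<beta> * (lam + r) / 4" using \<beta>_pos lam_pos r_pos by simp
  show ?thesis
  proof
    fix l show "frob_norm (Z l - Zstar) \<le> (\<beta> * (lam + r) / 4) ^ l * frob_norm (Z 0 - Zstar)"
    proof (induction l)
      case 0 then show ?case by simp
    next
      case (Suc l)
      have "frob_norm (Z (Suc l) - Zstar) \<le> (\<beta> * (lam + r) / 4) * frob_norm (Z l - Zstar)" by (rule step)
      also have "\<dots> \<le> (\<beta> * (lam + r) / 4) * ((\<beta> * (lam + r) / 4) ^ l * frob_norm (Z 0 - Zstar))"
        by (rule mult_left_mono[OF Suc c0])
      finally show ?case by (simp add: mult.assoc)
    qed
  qed
qed


end
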